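(* For every prime $p$, $\mathscr{U}(p)\supset\mathscr{A}(p)$.
   Context: Let $p$ be a prime. For an integer $r\ge 2$ let $x_1,\ldots,x_r$ be independent indeterminates over $\mathbb{F}_p$ and $f(x)=(x-x_1)\cdots(x-x_r)$. For integers $e\ge0$, $0\le d\le p$ write $f(x)^e=\sum_{i\ge0}c_ix^i$ ($c_i=0$ for $i<0$) and let $M_d(f(x)^e)$ be the $d\times d$ matrix with $(i,j)$ entry $c_{ip+j-d-1}$. Put $\delta(x_1,\ldots,x_r)=\prod_{1\le i<j\le r}(x_i-x_j)$. $\mathscr{A}(p)$ is the set of integer triples $(r,e,d)$ with $r\ge2$, $e\ge1$, $1\le d\le p$, such that $\det M_d(f(x)^e)=\varepsilon\,\delta(x_1,\ldots,x_r)^g$ for some $\varepsilon\in\mathbb{F}_p^{\times}$ and positive integer $g$. For integer triples put $g=g(r,e,d)=\left\{red-\frac{d(d+1)}{2}(p-1)\right\}\big/\frac{r(r-1)}{2}\in\mathbb{Q}$. $\mathscr{U}(p)$ is the set of integer triples $(r,e,d)$ with $r\ge2$, $e\ge1$, $1\le d\le p$, $d(p-1)\le re\le r(p-1)$, $g>0$, and $g\in2\mathbb{Z}$ if $p\ne2$, $g\in\mathbb{Z}$ if $p=2$. *)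

theory Defs
  imports "HOL-Library.Poly_Mapping" "HOL-Computational_Algebra.Polynomial"
    "Berlekamp_Zassenhaus.Finite_Field" "Jordan_Normal_Form.Determinant"
begin

type_synonym 'a mpoly = "(nat \<Rightarrow>\<^sub>0 nat) \<Rightarrow>\<^sub>0 'a"

definition mVar :: "nat \<Rightarrow> 'a::comm_ring_1 mpoly" where
  "mVar i = Poly_Mapping.single (Poly_Mapping.single i 1) 1"

definition mConst :: "'a::comm_ring_1 \<Rightarrow> 'a mpoly" where
  "mConst c = Poly_Mapping.single 0 c"

text \<open>f(x) = (x - x_1)...(x - x_r), with the indeterminates indexed 0..r-1.\<close>
definition fpoly :: "nat \<Rightarrow> 'a::comm_ring_1 mpoly poly" where
  "fpoly r = (\<Prod>i<r. [:- mVar i, 1:])"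

definition coeffZ :: "'b::zero poly \<Rightarrow> int \<Rightarrow> 'b" where
  "coeffZ q k = (if k < 0 then 0 else coeff q (nat k))"

text \<open>M_d(q): the d x d matrix whose (i,j) entry (1-indexed) is c_{ip+j-d-1};
  with 0-indexed i, j this is c_{(i+1)p+j-d}.\<close>
definition Mmat :: "nat \<Rightarrow> nat \<Rightarrow> 'b::zero poly \<Rightarrow> 'b mat" where
  "Mmat p d q = mat d d (\<lambda>(i,j). coeffZ q ((int i + 1) * int p + int j - int d))"

definition delta :: "nat \<Rightarrow> 'a::comm_ring_1 mpoly" where
  "delta r = (\<Prod>i<r. \<Prod>j\<in>{i<..<r}. (mVar i - mVar j))"

text \<open>Membership in A(p), where p = CARD('p) and F_p = 'p mod_ring.\<close>
definition inA :: "'p::prime_card itself \<Rightarrow> nat \<Rightarrow> nat \<Rightarrow> nat \<Rightarrow> bool" where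
  "inA _ r e d \<longleftrightarrow> r \<ge> 2 \<and> e \<ge> 1 \<and> 1 \<le> d \<and> d \<le> CARD('p) \<and>
     (\<exists>\<epsilon>::'p mod_ring. \<epsilon> \<noteq> 0 \<and> (\<exists>g::nat. g > 0 \<and>
        det (Mmat CARD('p) d ((fpoly r :: 'p mod_ring mpoly poly) ^ e))
          = mConst \<epsilon> * delta r ^ g))"

definition gval :: "nat \<Rightarrow> nat \<Rightarrow> nat \<Rightarrow> nat \<Rightarrow> rat" where
  "gval p r e d = (of_nat r * of_nat e * of_nat d
      - of_nat d * (of_nat d + 1) / 2 * (of_nat p - 1)) / (of_nat r * (of_nat r - 1) / 2)"

definition inU :: "nat \<Rightarrow> nat \<Rightarrow> nat \<Rightarrow> nat \<Rightarrow> bool" where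
  "inU p r e d \<longleftrightarrow> r \<ge> 2 \<and> e \<ge> 1 \<and> 1 \<le> d \<and> d \<le> p \<and>
     int d * (int p - 1) \<le> int r * int e \<and> int r * int e \<le> int r * (int p - 1) \<and>
     gval p r e d > 0 \<and>
     (if p \<noteq> 2 then (\<exists>k::int. gval p r e d = of_int (2 * k))
      else gval p r e d \<in> \<int>)"

end

theory Submission
  imports Defs
begin


definition mmono :: "(nat \<Rightarrow> 'b::comm_semiring_1) \<Rightarrow> (nat \<Rightarrow>\<^sub>0 nat) \<Rightarrow> 'b" where
  "mmono a \<mu> = (\<Prod>i\<in>Poly_Mapping.keys \<mu>. a i ^ Poly_Mapping.lookup \<mu> i)"

lemma mmono_sup:
  assumes "finite K" "Poly_Mapping.keys \<mu> \<subseteq> K"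
  shows "mmono a \<mu> = (\<Prod>i\<in>K. a i ^ Poly_Mapping.lookup \<mu> i)"
  unfolding mmono_def
  by (rule prod.mono_neutral_left[OF assms]) (auto simp: in_keys_iff)

lemma mmono_add: "mmono a (\<mu> + \<nu>) = mmono a \<mu> * mmono a \<nu>"
proof -
  let ?K = "Poly_Mapping.keys \<mu> \<union> Poly_Mapping.keys \<nu>"
  have f: "finite ?K" by simp
  have "Poly_Mapping.keys (\<mu> + \<nu>) \<subseteq> ?K"
    by (auto simp: in_keys_iff lookup_add)
  then have "mmono a (\<mu> + \<nu>) = (\<Prod>i\<in>?K. a i ^ Poly_Mapping.lookup (\<mu> + \<nu>) i)"
    using mmono_sup[OF f] by blast
  also have "\<dots> = (\<Prod>i\<in>?K. a i ^ Poly_Mapping.lookup \<mu> i) * (\<Prod>i\<in>?K. a i ^ Poly_Mapping.lookup \<nu> i)"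
    by (simp add: lookup_add power_add prod.distrib)
  also have "\<dots> = mmono a \<mu> * mmono a \<nu>"
    by (simp add: mmono_sup[OF f, of \<mu>] mmono_sup[OF f, of \<nu>])
  finally show ?thesis .
qed

lemma mmono_zero[simp]: "mmono a 0 = 1"
  by (simp add: mmono_def)

lemma mmono_single[simp]: "mmono a (Poly_Mapping.single i 1) = a i"
  by (simp add: mmono_def)

definition meval :: "('a::comm_ring_1 \<Rightarrow> 'b::comm_ring_1) \<Rightarrow> (nat \<Rightarrow> 'b) \<Rightarrow> 'a mpoly \<Rightarrow> 'b" where
  "meval hc a m = (\<Sum>\<mu>\<in>Poly_Mapping.keys m. hc (Poly_Mapping.lookup m \<mu>) * mmono a \<mu>)"

context
  fixes hc :: "'a::comm_ring_1 \<Rightarrow> 'b::comm_ring_1" and a :: "nat \<Rightarrow> 'b"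
  assumes hc: "comm_ring_hom hc"
begin

interpretation hc: comm_ring_hom hc by (rule hc)

lemma meval_sup:
  assumes "finite K" "Poly_Mapping.keys m \<subseteq> K"
  shows "meval hc a m = (\<Sum>\<mu>\<in>K. hc (Poly_Mapping.lookup m \<mu>) * mmono a \<mu>)"
  unfolding meval_def
  by (rule sum.mono_neutral_left[OF assms]) (auto simp: in_keys_iff)

lemma meval_add: "meval hc a (m + n) = meval hc a m + meval hc a n"
proof -
  let ?K = "Poly_Mapping.keys m \<union> Poly_Mapping.keys n"
  have f: "finite ?K" by simp
  have "Poly_Mapping.keys (m + n) \<subseteq> ?K"
    by (auto simp: in_keys_iff lookup_add)
  then have "meval hc a (m + n) = (\<Sum>\<mu>\<in>?K. hc (Poly_Mapping.lookup (m + n) \<mu>) * mmono a \<mu>)"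
    using meval_sup[OF f] by blast
  also have "\<dots> = (\<Sum>\<mu>\<in>?K. hc (Poly_Mapping.lookup m \<mu>) * mmono a \<mu>) + (\<Sum>\<mu>\<in>?K. hc (Poly_Mapping.lookup n \<mu>) * mmono a \<mu>)"
    by (simp add: lookup_add hc.hom_add distrib_right sum.distrib)
  also have "\<dots> = meval hc a m + meval hc a n"
    by (simp add: meval_sup[OF f, of m] meval_sup[OF f, of n])
  finally show ?thesis .
qed

lemma meval_zero: "meval hc a 0 = 0"
  by (simp add: meval_def)

lemma meval_sum: "meval hc a (sum f A) = (\<Sum>x\<in>A. meval hc a (f x))"
  by (induction A rule: infinite_finite_induct) (auto simp: meval_zero meval_add)

lemma meval_single: "meval hc a (Poly_Mapping.single \<mu> c) = hc c * mmono a \<mu>"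
  by (cases "c = 0") (auto simp: meval_def)

lemma pm_decomp: "m = (\<Sum>\<mu>\<in>Poly_Mapping.keys m. Poly_Mapping.single \<mu> (Poly_Mapping.lookup m \<mu>))"
proof (rule poly_mapping_eqI)
  fix k
  show "Poly_Mapping.lookup m k = Poly_Mapping.lookup (\<Sum>\<mu>\<in>Poly_Mapping.keys m. Poly_Mapping.single \<mu> (Poly_Mapping.lookup m \<mu>)) k"
    by (cases "k \<in> Poly_Mapping.keys m") (auto simp: lookup_sum lookup_single in_keys_iff when_def)
qed

lemma meval_mult: "meval hc a (m * n) = meval hc a m * meval hc a n"
proof -
  let ?S = "\<lambda>m \<mu>. Poly_Mapping.single \<mu> (Poly_Mapping.lookup m \<mu>)"
  have "m * n = (\<Sum>\<mu>\<in>Poly_Mapping.keys m. ?S m \<mu>) * (\<Sum>\<nu>\<in>Poly_Mapping.keys n. ?S n \<nu>)"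
    using pm_decomp[of m] pm_decomp[of n] by simp
  also have "\<dots> = (\<Sum>\<mu>\<in>Poly_Mapping.keys m. \<Sum>\<nu>\<in>Poly_Mapping.keys n. ?S m \<mu> * ?S n \<nu>)"
    by (simp add: sum_distrib_left sum_distrib_right sum.swap[of _ "Poly_Mapping.keys n"])
  finally have "meval hc a (m * n) = (\<Sum>\<mu>\<in>Poly_Mapping.keys m. \<Sum>\<nu>\<in>Poly_Mapping.keys n. meval hc a (?S m \<mu> * ?S n \<nu>))"
    by (simp add: meval_sum)
  also have "\<dots> = (\<Sum>\<mu>\<in>Poly_Mapping.keys m. \<Sum>\<nu>\<in>Poly_Mapping.keys n. meval hc a (?S m \<mu>) * meval hc a (?S n \<nu>))"
    by (simp add: mult_single meval_single mmono_add hc.hom_mult ac_simps)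
  also have "\<dots> = meval hc a m * meval hc a n"
    by (simp add: meval_single meval_def[of hc a m] meval_def[of hc a n] sum_product)
  finally show ?thesis .
qed

lemma meval_hom: "comm_ring_hom (meval hc a)"
proof
  show "meval hc a 1 = 1"
    using meval_single[of 0 1] by (simp del: single_one add: single_one[symmetric])
qed (auto simp: meval_add meval_mult meval_zero)


lemma meval_mVar: "meval hc a (mVar i) = a i"
  unfolding mVar_def meval_single hc.hom_one mmono_single by simp

lemma meval_mConst: "meval hc a (mConst c) = hc c"
  by (simp add: mConst_def meval_single)

interpretation me: comm_ring_hom "meval hc a" by (rule meval_hom)
interpretation mp: map_poly_comm_ring_hom "meval hc a" ..

lemma meval_delta: "meval hc a (delta r) = (\<Prod>i<r. \<Prod>j\<in>{i<..<r}. (a i - a j))"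
  by (simp add: delta_def me.hom_prod me.hom_minus meval_mVar)

lemma map_fpoly: "map_poly (meval hc a) (fpoly r) = (\<Prod>i<r. [:- a i, 1:])"
  by (simp add: fpoly_def mp.hom_prod meval_mVar me.hom_uminus)

end

lemma Mmat_map: "h 0 = 0 \<Longrightarrow> Mmat p d (map_poly h q) = map_mat h (Mmat p d q)"
  by (rule eq_matI) (auto simp: Mmat_def coeffZ_def coeff_map_poly)

lemma det_eval:
  assumes hc: "comm_ring_hom hc"
  shows "meval hc a (det (Mmat p d (fpoly r ^ e))) = det (Mmat p d ((\<Prod>i<r. [:- a i, 1:])^e))"
proof -
  interpret me: comm_ring_hom "meval hc a" by (rule meval_hom[OF hc])
  interpret mp: map_poly_comm_ring_hom "meval hc a" ..
  have "det (Mmat p d ((\<Prod>i<r. [:- a i, 1:])^e)) = det (Mmat p d (map_poly (meval hc a) (fpoly r ^ e)))"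
    by (simp add: mp.hom_power map_fpoly[OF hc])
  also have "\<dots> = meval hc a (det (Mmat p d (fpoly r ^ e)))"
    by (simp add: Mmat_map)
  finally show ?thesis by simp
qed


definition homz :: "int \<Rightarrow> 'c::comm_ring_1 poly \<Rightarrow> bool" where
  "homz n q \<longleftrightarrow> (\<forall>i. int i \<noteq> n \<longrightarrow> coeff q i = 0)"

lemma homz_0[simp]: "homz n 0"
  by (simp add: homz_def)

lemma homz_add: "homz n q \<Longrightarrow> homz n q' \<Longrightarrow> homz n (q + q')"
  by (simp add: homz_def)

lemma homz_uminus: "homz n q \<Longrightarrow> homz n (- q)"
  by (simp add: homz_def)

lemma homz_diff: "homz n q \<Longrightarrow> homz n q' \<Longrightarrow> homz n (q - q')"
  by (simp add: homz_def)

lemma homz_sum: "(\<And>x. x \<in> A \<Longrightarrow> homz n (f x)) \<Longrightarrow> homz n (sum f A)"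
  by (induction A rule: infinite_finite_induct) (auto intro: homz_add)

lemma homz_mult:
  assumes "homz n q" "homz m q'"
  shows "homz (n + m) (q * q')"
  unfolding homz_def
proof (intro allI impI)
  fix k assume k: "int k \<noteq> n + m"
  have "coeff (q * q') k = (\<Sum>i\<le>k. coeff q i * coeff q' (k - i))" by (rule coeff_mult)
  also have "\<dots> = 0"
  proof (rule sum.neutral, intro ballI)
    fix i assume i: "i \<in> {..k}"
    show "coeff q i * coeff q' (k - i) = 0"
    proof (cases "int i = n")
      case True
      then have "int (k - i) \<noteq> m" using i k by auto
      then show ?thesis using assms(2) by (simp add: homz_def)
    next
      case False
      then show ?thesis using assms(1) by (simp add: homz_def)
    qed
  qed
  finally show "coeff (q * q') k = 0" .
qed

lemma homz_const: "homz 0 [:c:]"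
  by (auto simp: homz_def coeff_pCons split: nat.splits)

lemma homz_1: "homz 0 1"
  by (auto simp: homz_def)

lemma homz_prod: "(\<And>x. x \<in> A \<Longrightarrow> homz (n x) (f x)) \<Longrightarrow> homz (\<Sum>x\<in>A. n x) (\<Prod>x\<in>A. f x)"
proof (induction A rule: infinite_finite_induct)
  case (infinite A) then show ?case by (simp add: homz_1)
next
  case empty then show ?case by (simp add: homz_1)
next
  case (insert x F)
  have h1: "homz (n x) (f x)" by (rule insert.prems) simp
  have h2: "homz (sum n F) (prod f F)" by (rule insert.IH) (rule insert.prems, simp)
  have "homz (n x + sum n F) (f x * prod f F)"
    by (rule homz_mult[OF h1 h2])
  then show ?case using insert.hyps by simp
qed

lemma homz_power: "homz n q \<Longrightarrow> homz (int k * n) (q ^ k)"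
proof (induction k)
  case 0 then show ?case by (simp add: homz_1)
next
  case (Suc k)
  have "homz (n + int k * n) (q * q ^ k)" by (rule homz_mult[OF Suc.prems Suc.IH[OF Suc.prems]])
  then show ?case by (simp add: algebra_simps)
qed

lemma homz_monom: "homz (int n) (monom c n)"
  by (simp add: homz_def coeff_monom)

lemma homz_unique:
  assumes "homz n q" "homz m q" "q \<noteq> 0"
  shows "n = m"
proof -
  from assms(3) obtain i where "coeff q i \<noteq> 0"
    by (metis leading_coeff_0_iff)
  then show ?thesis using assms(1,2) unfolding homz_def by metis
qed

lemma homz_neg:
  assumes "homz n q" "n < 0" shows "q = 0"
proof (rule poly_eqI)
  fix i
  have "int i \<noteq> n" using assms(2) by simp
  then show "coeff q i = coeff 0 i" using assms(1) by (simp add: homz_def)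
qed

definition hx :: "int \<Rightarrow> 'c::comm_ring_1 poly poly \<Rightarrow> bool" where
  "hx m G \<longleftrightarrow> (\<forall>k. homz (m - int k) (coeff G k))"

lemma hx_mult:
  assumes "hx m G" "hx n H"
  shows "hx (m + n) (G * H)"
  unfolding hx_def
proof
  fix k
  show "homz (m + n - int k) (coeff (G * H) k)"
    unfolding coeff_mult
  proof (rule homz_sum)
    fix i assume i: "i \<in> {..k}"
    have h: "homz ((m - int i) + (n - int (k - i))) (coeff G i * coeff H (k - i))"
      using assms by (auto simp: hx_def intro: homz_mult)
    have e: "(m - int i) + (n - int (k - i)) = m + n - int k" using i by auto
    show "homz (m + n - int k) (coeff G i * coeff H (k - i))" using h unfolding e .
  qed
qed

lemma hx_1: "hx 0 1"
  by (auto simp: hx_def coeff_1 homz_1)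

lemma hx_power: "hx m G \<Longrightarrow> hx (int k * m) (G ^ k)"
proof (induction k)
  case 0 then show ?case by (simp add: hx_1)
next
  case (Suc k)
  have "hx (m + int k * m) (G * G ^ k)" by (rule hx_mult[OF Suc.prems Suc.IH[OF Suc.prems]])
  then show ?case by (simp add: algebra_simps)
qed

lemma hx_prod: "(\<And>x. x \<in> A \<Longrightarrow> hx (n x) (f x)) \<Longrightarrow> hx (\<Sum>x\<in>A. n x) (\<Prod>x\<in>A. f x)"
proof (induction A rule: infinite_finite_induct)
  case (infinite A) then show ?case by (simp add: hx_1)
next
  case empty then show ?case by (simp add: hx_1)
next
  case (insert x F)
  have h1: "hx (n x) (f x)" by (rule insert.prems) simp
  have h2: "hx (sum n F) (prod f F)" by (rule insert.IH) (rule insert.prems, simp)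
  have "hx (n x + sum n F) (f x * prod f F)"
    by (rule hx_mult[OF h1 h2])
  then show ?case using insert.hyps by simp
qed

lemma hx_lin: "homz 1 b \<Longrightarrow> hx 1 [:- b, 1:]"
  unfolding hx_def
proof
  fix k assume b: "homz 1 b"
  show "homz (1 - int k) (coeff [:- b, 1:] k)"
  proof (cases k)
    case 0 then show ?thesis using b by (simp add: homz_uminus)
  next
    case (Suc k')
    show ?thesis
    proof (cases k')
      case 0
      then show ?thesis using Suc homz_1 by simp
    next
      case (Suc k'')
      then have "coeff [:- b, 1:] k = 0" using \<open>k = Suc k'\<close> by simp
      then show ?thesis by simp
    qed
  qed
qed

lemma coeffZ_homz:
  assumes "hx m G" shows "homz (m - k) (coeffZ G k)"
proof (cases "k < 0")
  case True then show ?thesis by (simp add: coeffZ_def)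
next
  case False
  have "homz (m - int (nat k)) (coeff G (nat k))" using assms unfolding hx_def by blast
  then show ?thesis using False by (simp add: coeffZ_def)
qed

lemma signof_homz: "homz 0 (signof \<pi> :: 'c::comm_ring_1 poly)"
  unfolding sign_def using homz_1 homz_uminus[OF homz_1] by auto



lemma det_homz:
  assumes "hx m G"
  shows "homz (\<Sum>i<d. m + int d - (int i + 1) * int p - int i) (det (Mmat p d G))"
proof -
  have car: "Mmat p d G \<in> carrier_mat d d" by (simp add: Mmat_def)
  show ?thesis
    unfolding det_def'[OF car]
  proof (rule homz_sum)
    fix \<pi> assume "\<pi> \<in> {\<pi>. \<pi> permutes {0..<d}}"
    then have pi: "\<pi> permutes {0..<d}" by simp
    have h: "homz (0 + (\<Sum>i\<in>{0..<d}. m - ((int i + 1) * int p + int (\<pi> i) - int d)))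
            (signof \<pi> * (\<Prod>i=0..<d. Mmat p d G $$ (i, \<pi> i)))"
    proof (rule homz_mult[OF signof_homz homz_prod])
      fix i assume i: "i \<in> {0..<d}"
      then have "\<pi> i < d" using pi by (meson atLeastLessThan_iff permutes_in_image)
      then have "Mmat p d G $$ (i, \<pi> i) = coeffZ G ((int i + 1) * int p + int (\<pi> i) - int d)"
        using i by (simp add: Mmat_def)
      then show "homz (m - ((int i + 1) * int p + int (\<pi> i) - int d)) (Mmat p d G $$ (i, \<pi> i))"
        using coeffZ_homz[OF assms] by simp
    qed
    have P: "(\<Sum>i\<in>{0..<d}. int (\<pi> i)) = (\<Sum>i\<in>{0..<d}. int i)"
      using sum.permute[OF pi, of int] by (simp add: comp_def)
    have L: "(\<Sum>i\<in>{0..<d}. m - ((int i + 1) * int p + int (\<pi> i) - int d))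
       = (\<Sum>i\<in>{0..<d}. m + int d - (int i + 1) * int p) - (\<Sum>i\<in>{0..<d}. int (\<pi> i))"
      by (subst sum_subtractf[symmetric]) (rule sum.cong, auto)
    have R: "(\<Sum>i<d. m + int d - (int i + 1) * int p - int i)
       = (\<Sum>i\<in>{0..<d}. m + int d - (int i + 1) * int p) - (\<Sum>i\<in>{0..<d}. int i)"
      by (subst sum_subtractf[symmetric]) (simp add: lessThan_atLeast0)
    have eq: "0 + (\<Sum>i\<in>{0..<d}. m - ((int i + 1) * int p + int (\<pi> i) - int d))
       = (\<Sum>i<d. m + int d - (int i + 1) * int p - int i)"
      unfolding L R P by simp
    show "homz (\<Sum>i<d. m + int d - (int i + 1) * int p - int i)
            (signof \<pi> * (\<Prod>i=0..<d. Mmat p d G $$ (i, \<pi> i)))"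
      using h unfolding eq .
  qed
qed





definition Vd :: "nat \<Rightarrow> (nat \<Rightarrow> 'c::comm_ring_1) \<Rightarrow> 'c" where
  "Vd r a = (\<Prod>i<r. \<Prod>j\<in>{i<..<r}. (a i - a j))"

definition Gp :: "nat \<Rightarrow> (nat \<Rightarrow> 'c::comm_ring_1) \<Rightarrow> 'c poly" where
  "Gp r a = (\<Prod>i<r. [:- a i, 1:])"

lemma Vd_nonzero:
  fixes a :: "nat \<Rightarrow> 'c::idom"
  assumes "inj_on a {..<r}"
  shows "Vd r a \<noteq> 0"
  unfolding Vd_def using assms
  by (auto simp: inj_on_def) (metis lessThan_iff less_trans less_irrefl)

definition hcS :: "'a::comm_ring_1 \<Rightarrow> 'a poly poly" where "hcS c = [:[:c:]:]"

lemma hcS_hom: "comm_ring_hom hcS"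
proof
  show "hcS 1 = 1" by (simp add: hcS_def one_pCons[symmetric])
qed (auto simp: hcS_def)

lemma hcS_eq_0: "hcS c = 0 \<longleftrightarrow> c = 0"
  by (simp add: hcS_def)

lemma det_zero_row:
  assumes A: "A \<in> carrier_mat n n" and k: "k < n" and z: "\<And>j. j < n \<Longrightarrow> A $$ (k, j) = 0"
  shows "det A = 0"
  unfolding det_def'[OF A]
proof (rule sum.neutral, intro ballI)
  fix \<pi> assume "\<pi> \<in> {\<pi>. \<pi> permutes {0..<n}}"
  then have pi: "\<pi> permutes {0..<n}" by simp
  have "\<pi> k < n" using permutes_in_image[OF pi, of k] k by simp
  then have "(\<Prod>i=0..<n. A $$ (i, \<pi> i)) = 0"
    by (intro prod_zero bexI[of _ k]) (use k z in auto)
  then show "signof \<pi> * (\<Prod>i=0..<n. A $$ (i, \<pi> i)) = 0" by simp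
qed

definition tr :: "nat \<Rightarrow> nat" where
  "tr i = (if i = 0 then 1 else if i = 1 then 0 else i)"

lemma tr_tr[simp]: "tr (tr i) = i"
  by (simp add: tr_def)

lemma bij_tr: "2 \<le> r \<Longrightarrow> bij_betw tr {..<r} {..<r}"
  by (rule bij_betw_byWitness[where f'=tr]) (auto simp: tr_def)

lemma Gp_tr: "2 \<le> r \<Longrightarrow> Gp r (a \<circ> tr) = Gp r a"
  unfolding Gp_def using prod.reindex_bij_betw[OF bij_tr, of r "\<lambda>i. [:- a i, 1:]"] by simp

lemma Vd_tr:
  assumes r: "2 \<le> r"
  shows "Vd r (a \<circ> tr) = - Vd r a"
proof -
  define Pr where "Pr = Sigma {..<r} (\<lambda>i. {i<..<r})"
  define Pr' where "Pr' = Pr - {(0,1)}"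
  have fin: "finite Pr" unfolding Pr_def by simp
  have mem: "(0,1) \<in> Pr" unfolding Pr_def using r by auto
  have V: "Vd r b = (b 0 - b 1) * (\<Prod>(i,j)\<in>Pr'. b i - b j)" for b :: "nat \<Rightarrow> 'a"
  proof -
    have "Vd r b = (\<Prod>(i,j)\<in>Pr. b i - b j)"
      unfolding Vd_def Pr_def by (rule prod.Sigma) auto
    also have "\<dots> = (b 0 - b 1) * (\<Prod>(i,j)\<in>Pr'. b i - b j)"
      unfolding Pr'_def using prod.remove[OF fin mem, of "\<lambda>(i,j). b i - b j"] by simp
    finally show ?thesis .
  qed
  define h where "h = (\<lambda>(i,j). (tr i, tr j))"
  have bij: "bij_betw h Pr' Pr'"
  proof (rule bij_betw_byWitness[where f'=h])
    show "\<forall>x\<in>Pr'. h (h x) = x" by (auto simp: h_def)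
    show "\<forall>x\<in>Pr'. h (h x) = x" by (auto simp: h_def)
    show "h ` Pr' \<subseteq> Pr'" by (auto simp: h_def Pr'_def Pr_def tr_def split: if_splits)
    show "h ` Pr' \<subseteq> Pr'" by (auto simp: h_def Pr'_def Pr_def tr_def split: if_splits)
  qed
  have "(\<Prod>x\<in>Pr'. (\<lambda>(i,j). a i - a j) (h x)) = (\<Prod>x\<in>Pr'. (\<lambda>(i,j). a i - a j) x)"
    by (rule prod.reindex_bij_betw[OF bij])
  then have P: "(\<Prod>(i,j)\<in>Pr'. (a \<circ> tr) i - (a \<circ> tr) j) = (\<Prod>(i,j)\<in>Pr'. a i - a j)"
    by (simp add: h_def case_prod_beta)
  show ?thesis
    unfolding V[of "a \<circ> tr"] V[of a] P by (simp add: tr_def algebra_simps)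
qed

lemma sum_int_id: "2 * (\<Sum>i<n. int i) = int n * (int n - 1)"
  by (induction n) (auto simp: algebra_simps)

lemma sum_card_gt: "2 * (\<Sum>i<r. int (card {i<..<r})) = int r * (int r - 1)"
proof -
  have "(\<Sum>i<r. int (card {i<..<r})) = (\<Sum>i<r. int r - 1 - int i)"
    by (rule sum.cong) auto
  also have "\<dots> = (\<Sum>i<r. int r - 1) - (\<Sum>i<r. int i)"
    by (simp add: sum_subtractf)
  finally have "2 * (\<Sum>i<r. int (card {i<..<r})) = 2 * (int r * (int r - 1)) - 2 * (\<Sum>i<r. int i)"
    by (simp add: algebra_simps)
  then show ?thesis using sum_int_id[of r] by (simp add: algebra_simps)
qed


theorem lemma4:
  fixes r e d :: nat
  assumes "inA TYPE('p::prime_card) r e d"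
  shows "inU CARD('p) r e d"
proof -
  define P where "P = CARD('p)"
  from assms obtain \<epsilon> :: "'p mod_ring" and g :: nat where
    r: "r \<ge> 2" and e: "e \<ge> 1" and d1: "1 \<le> d" and dP: "d \<le> P" and eps: "\<epsilon> \<noteq> 0" and g: "g > 0"
    and eq: "det (Mmat P d ((fpoly r :: 'p mod_ring mpoly poly) ^ e)) = mConst \<epsilon> * delta r ^ g"
    unfolding inA_def P_def by blast
  have key: "det (Mmat P d (Gp r a ^ e)) = hcS \<epsilon> * Vd r a ^ g" for a :: "nat \<Rightarrow> 'p mod_ring poly poly"
  proof -
    interpret me: comm_ring_hom "meval hcS a" by (rule meval_hom[OF hcS_hom])
    have "meval hcS a (det (Mmat P d ((fpoly r :: 'p mod_ring mpoly poly) ^ e))) = meval hcS a (mConst \<epsilon> * delta r ^ g)"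
      by (simp only: eq)
    then show ?thesis
      by (simp add: det_eval[OF hcS_hom] Gp_def Vd_def me.hom_mult me.hom_power meval_mConst[OF hcS_hom] meval_delta[OF hcS_hom])
  qed
  define a1 :: "nat \<Rightarrow> 'p mod_ring poly poly" where "a1 i = monom (monom 1 (Suc i)) 1" for i
  have a1_inj: "inj a1"
    by (auto simp: inj_def a1_def monom_eq_iff')
  have a1_nz: "a1 i \<noteq> 0" for i by (simp add: a1_def)
  have hcnz: "hcS \<epsilon> \<noteq> 0" using eps by (simp add: hcS_eq_0)
  have Vnz: "Vd r a1 ^ g \<noteq> 0" using Vd_nonzero[of a1 r] inj_on_subset[OF a1_inj subset_UNIV] by simp
  have rhs_nz: "hcS \<epsilon> * Vd r a1 ^ g \<noteq> 0" using hcnz Vnz by simp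
  have hm1: "homz 1 (a1 i)" for i
    using homz_monom[of 1 "monom 1 (Suc i)"] by (simp add: a1_def)
  have hx1: "hx (int r) (Gp r a1)"
  proof -
    have "hx (\<Sum>i<r. 1) (Gp r a1)" unfolding Gp_def
      by (rule hx_prod, rule hx_lin, rule hm1)
    then show ?thesis by simp
  qed
  have hxe: "hx (int (r*e)) (Gp r a1 ^ e)" using hx_power[OF hx1, of e] by (simp add: algebra_simps)

  have f1: "d * (P - 1) \<le> r * e"
  proof (rule ccontr)
    assume "\<not> ?thesis" then have lt: "r*e < d*(P-1)" by simp
    have "det (Mmat P d (Gp r a1 ^ e)) = 0"
    proof (rule det_zero_row[of _ d "d - 1"])
      show "Mmat P d (Gp r a1 ^ e) \<in> carrier_mat d d" by (simp add: Mmat_def)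
      show "d - 1 < d" using d1 by simp
      fix j assume j: "j < d"
      have ent: "Mmat P d (Gp r a1 ^ e) $$ (d-1, j) = coeffZ (Gp r a1 ^ e) ((int (d-1) + 1) * int P + int j - int d)"
        using j d1 by (simp add: Mmat_def)
      have hz: "homz (int (r*e) - ((int (d-1) + 1) * int P + int j - int d)) (coeffZ (Gp r a1 ^ e) ((int (d-1) + 1) * int P + int j - int d))"
        by (rule coeffZ_homz[OF hxe])
      have neg: "int (r*e) - ((int (d-1) + 1) * int P + int j - int d) < 0"
      proof -
        have i1: "int (d - 1) + 1 = int d" using d1 by simp
        have P1: "P \<ge> 1" using dP d1 by simp
        have "int (r*e) < int (d * (P - 1))" using lt of_nat_less_iff by blast
        also have "\<dots> = int d * int P - int d" using P1 by (simp add: of_nat_diff algebra_simps)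
        finally show ?thesis unfolding i1 by simp
      qed
      show "Mmat P d (Gp r a1 ^ e) $$ (d-1, j) = 0" using homz_neg[OF hz neg] ent by simp
    qed
    then show False using key[of a1] rhs_nz by simp
  qed

  define a0 where "a0 i = (if i = 0 then 0 else a1 i)" for i
  have a0_inj: "inj_on a0 {..<r}"
    using a1_nz injD[OF a1_inj] unfolding inj_on_def a0_def by (metis)
  have f2: "e < P"
  proof (rule ccontr)
    assume "\<not> e < P" then have Pe: "P \<le> e" by simp
    have spl: "Gp r a0 = [:0,1:] * (\<Prod>i\<in>{..<r}-{0}. [:- a0 i, 1:])"
      unfolding Gp_def using prod.remove[of "{..<r}" 0 "\<lambda>i. [:- a0 i, 1:]"] r by (simp add: a0_def)
    have dv: "monom 1 e dvd Gp r a0 ^ e"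
    proof -
      have "[:0,1:] ^ e dvd Gp r a0 ^ e" unfolding spl power_mult_distrib by (rule dvd_triv_left)
      then show ?thesis by (simp add: monom_altdef)
    qed
    have cz: "coeff (Gp r a0 ^ e) k = 0" if "k < e" for k
      using dv that unfolding monom_1_dvd_iff' by blast
    have "det (Mmat P d (Gp r a0 ^ e)) = 0"
    proof (rule det_zero_row[of _ d 0])
      show "Mmat P d (Gp r a0 ^ e) \<in> carrier_mat d d" by (simp add: Mmat_def)
      show "0 < d" using d1 by simp
      fix j assume j: "j < d"
      have ent: "Mmat P d (Gp r a0 ^ e) $$ (0, j) = coeffZ (Gp r a0 ^ e) (int P + int j - int d)"
        using j d1 by (simp add: Mmat_def)
      have nn: "\<not> (int P + int j - int d < 0)" using dP by simp
      have "int P + int j - int d < int e" using j Pe by simp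
      then have lt: "nat (int P + int j - int d) < e" using nn by (simp add: nat_less_iff)
      show "Mmat P d (Gp r a0 ^ e) $$ (0, j) = 0" using ent nn cz[OF lt] by (simp add: coeffZ_def)
    qed
    then show False using key[of a0] hcnz Vd_nonzero[OF a0_inj] by simp
  qed

  have hzL: "homz (\<Sum>i<d. int (r*e) + int d - (int i + 1) * int P - int i) (det (Mmat P d (Gp r a1 ^ e)))"
    by (rule det_homz[OF hxe])
  have hzV: "homz (\<Sum>i<r. \<Sum>j\<in>{i<..<r}. 1) (Vd r a1)"
    unfolding Vd_def
    by (rule homz_prod, rule homz_prod, rule homz_diff, rule hm1, rule hm1)
  have hzR: "homz (0 + int g * (\<Sum>i<r. \<Sum>j\<in>{i<..<r}. 1)) (hcS \<epsilon> * Vd r a1 ^ g)"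
    by (rule homz_mult[OF _ homz_power[OF hzV]]) (simp add: hcS_def homz_const)
  have D: "(\<Sum>i<d. int (r*e) + int d - (int i + 1) * int P - int i) = int g * (\<Sum>i<r. \<Sum>j\<in>{i<..<r}. (1::int))"
    using homz_unique[OF hzL[unfolded key] hzR rhs_nz] by simp
  have N: "2 * (\<Sum>i<r. \<Sum>j\<in>{i<..<r}. (1::int)) = int r * (int r - 1)"
    using sum_card_gt[of r] by simp
  have L2: "2 * (\<Sum>i<d. int (r*e) + int d - (int i + 1) * int P - int i)
      = 2 * int d * (int (r*e) + int d - int P) - (int P + 1) * (int d * (int d - 1))"
  proof -
    have "(\<Sum>i<d. int (r*e) + int d - (int i + 1) * int P - int i) = (\<Sum>i<d. (int (r*e) + int d - int P) - (int P + 1) * int i)"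
      by (rule sum.cong) (auto simp: algebra_simps)
    also have "\<dots> = int d * (int (r*e) + int d - int P) - (int P + 1) * (\<Sum>i<d. int i)"
      by (simp add: sum_subtractf sum_distrib_left)
    finally have "2 * (\<Sum>i<d. int (r*e) + int d - (int i + 1) * int P - int i)
        = 2 * int d * (int (r*e) + int d - int P) - (int P + 1) * (2 * (\<Sum>i<d. int i))"
      by (simp add: algebra_simps)
    then show ?thesis unfolding sum_int_id .
  qed
  have gR: "int g * (int r * (int r - 1)) = 2 * int d * int r * int e - (int P - 1) * int d * (int d + 1)"
  proof -
    have "int g * (int r * (int r - 1)) = int g * (2 * (\<Sum>i<r. \<Sum>j\<in>{i<..<r}. (1::int)))" using N by simp
    also have "\<dots> = 2 * (\<Sum>i<d. int (r*e) + int d - (int i + 1) * int P - int i)" using D by simp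
    also have "\<dots> = 2 * int d * int r * int e - (int P - 1) * int d * (int d + 1)"
      unfolding L2 by (simp add: algebra_simps)
    finally show ?thesis .
  qed
  have gQ: "(of_nat g::rat) * (of_nat r * (of_nat r - 1)) = 2 * of_nat d * of_nat r * of_nat e - (of_nat P - 1) * of_nat d * (of_nat d + 1)"
    using arg_cong[OF gR, of "of_int :: int \<Rightarrow> rat"] by simp
  have rnz: "(of_nat r :: rat) * (of_nat r - 1) \<noteq> 0" using r by simp
  have gv: "gval P r e d = of_nat g"
  proof -
    have num: "of_nat r * of_nat e * of_nat d - of_nat d * (of_nat d + 1) / 2 * (of_nat P - 1)
        = (of_nat g :: rat) * (of_nat r * (of_nat r - 1) / 2)"
      using gQ by (simp add: field_simps)
    have den: "(of_nat r * (of_nat r - 1) / 2 :: rat) \<noteq> 0" using rnz by simp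
    show ?thesis unfolding gval_def num using den by simp
  qed

  have f4: "even g" if P2: "P \<noteq> 2"
  proof (rule ccontr)
    assume odd: "\<not> even g"
    interpret hc: comm_ring_hom hcS by (rule hcS_hom)
    have "hcS \<epsilon> * Vd r a1 ^ g = hcS \<epsilon> * Vd r (a1 \<circ> tr) ^ g"
      using key[of a1, symmetric] key[of "a1 \<circ> tr"] unfolding Gp_tr[OF r] by (rule trans)
    also have "\<dots> = - (hcS \<epsilon> * Vd r a1 ^ g)" unfolding Vd_tr[OF r] using odd by simp
    finally have "2 * (hcS \<epsilon> * Vd r a1 ^ g) = 0" by simp
    then have "(2 :: 'p mod_ring poly poly) = 0" using rhs_nz mult_eq_0_iff by blast
    then have "hcS (2::'p mod_ring) = 0" by (simp add: hc.hom_numeral)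
    then have "(of_nat 2 :: 'p mod_ring) = 0" by (simp add: hcS_eq_0)
    then have "P dvd 2" unfolding P_def by (rule of_nat_0_mod_ring_dvd)
    moreover have "prime P" unfolding P_def by (rule prime_card)
    ultimately have "P = 2" using dvd_imp_le prime_ge_2_nat by (metis le_antisym zero_less_numeral)
    then show False using P2 by simp
  qed

  have c1: "int d * (int P - 1) \<le> int r * int e"
  proof -
    have "int (d * (P - 1)) \<le> int (r * e)" using f1 of_nat_le_iff by blast
    then show ?thesis using dP d1 by (simp add: of_nat_diff)
  qed
  have c2: "int r * int e \<le> int r * (int P - 1)"
    using f2 by (intro mult_left_mono) auto
  show ?thesis
    unfolding inU_def P_def[symmetric]
  proof (intro conjI)
    show "gval P r e d > 0" using gv g by simp
    show "if P \<noteq> 2 then \<exists>k::int. gval P r e d = of_int (2 * k) else gval P r e d \<in> \<int>"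
    proof (cases "P = 2")
      case True then show ?thesis using gv by simp
    next
      case False
      then obtain k where "g = 2 * k" using f4 by blast
      then have "gval P r e d = of_int (2 * int k)" using gv by simp
      then have "\<exists>k::int. gval P r e d = of_int (2 * k)" by blast
      then show ?thesis using False by simp
    qed
  qed (use r e d1 dP c1 c2 in auto)
qed


end
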